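(* Let $a,x,u,v$ be integers with $3\le a\le x$, $0\le u\le a-3$, and $u+2\le v\le\min\left(a-1,\frac{a(x-1)}{x}\right)$. Let $\lambda$ consist of $ua+v$ parts equal to $x$ and $v-(u+1)$ parts equal to $ax$, and let $n=|\lambda|$, so that $n=x[(a+1)(v-1)+1]$ and $n-1=xa(v-1)+xv-1$. For $0\le i\le n-2$ write uniquely $i=\frac{n}{x}r_i+(v-1)p_i+q_i$ with integers $0\le r_i<x$, $0\le p_i<a+2$, $0\le q_i<v-1$, $0\le (v-1)p_i+q_i<n/x$. Let $f(i)=ar_i-(xv-1)p_i+xaq_i$ and, for $k\in\mathbb{Z}$, $F_k=\{i\in\{1,\dots,n-2\}:k=-\lfloor f(i)/(n-1)\rfloor\}$. Then $\{1,\dots,n-2\}=F_0\uplus F_1\uplus F_2$, i.e. $F_k=\emptyset$ for $k\notin\{0,1,2\}$. *)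

theory Defs
  imports Complex_Main
begin

definition part_size :: "int \<Rightarrow> int \<Rightarrow> int \<Rightarrow> int \<Rightarrow> int" where
  "part_size a x u v = (u*a + v) * x + (v - (u+1)) * (a*x)"

text \<open>The unique decomposition i = (n/x) r + (v-1) p + q with 0 <= q < v-1 and
  0 <= (v-1) p + q < n/x, 0 <= r < x (here n/x is the integer (a+1)(v-1)+1).\<close>
definition r_idx :: "int \<Rightarrow> int \<Rightarrow> int \<Rightarrow> int \<Rightarrow> int \<Rightarrow> int" where
  "r_idx a x u v i = i div (part_size a x u v div x)"

definition p_idx :: "int \<Rightarrow> int \<Rightarrow> int \<Rightarrow> int \<Rightarrow> int \<Rightarrow> int" where
  "p_idx a x u v i = (i mod (part_size a x u v div x)) div (v - 1)"

definition q_idx :: "int \<Rightarrow> int \<Rightarrow> int \<Rightarrow> int \<Rightarrow> int \<Rightarrow> int" where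
  "q_idx a x u v i = (i mod (part_size a x u v div x)) mod (v - 1)"

definition f_fun :: "int \<Rightarrow> int \<Rightarrow> int \<Rightarrow> int \<Rightarrow> int \<Rightarrow> int" where
  "f_fun a x u v i = a * r_idx a x u v i - (x*v - 1) * p_idx a x u v i + x*a * q_idx a x u v i"

definition F_set :: "int \<Rightarrow> int \<Rightarrow> int \<Rightarrow> int \<Rightarrow> int \<Rightarrow> int set" where
  "F_set a x u v k = {i \<in> {1..part_size a x u v - 2}.
      k = - \<lfloor>real_of_int (f_fun a x u v i) / real_of_int (part_size a x u v - 1)\<rfloor>}"

end

theory Submission
  imports Defs
begin

lemma key:
  fixes a x u v i :: int
  assumes "3 \<le> a" "a \<le> x" "0 \<le> u" "u \<le> a - 3"
    and "u + 2 \<le> v" "v \<le> a - 1"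
    and "1 \<le> i" "i \<le> part_size a x u v - 2"
  shows "- \<lfloor>real_of_int (f_fun a x u v i) / real_of_int (part_size a x u v - 1)\<rfloor> \<in> {0,1,2}"
proof -
  define m where "m = (a+1)*(v-1)+1"
  define N where "N = x*a*(v-1) + x*v - 1"
  have n: "part_size a x u v = x*m" unfolding part_size_def m_def by (simp add: algebra_simps)
  have mx: "part_size a x u v div x = m" using n assms by simp
  have N: "part_size a x u v - 1 = N" unfolding n m_def N_def by (simp add: algebra_simps)
  define r where "r = i div m"
  define s where "s = i mod m"
  define p where "p = s div (v-1)"
  define q where "q = s mod (v-1)"
  have f: "f_fun a x u v i = a*r - (x*v-1)*p + x*a*q"
    unfolding f_fun_def r_idx_def p_idx_def q_idx_def mx r_def p_def q_def s_def by simp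
  have mpos: "m > 0" unfolding m_def using assms by (simp add: mult_pos_pos)
  have r0: "r \<ge> 0" unfolding r_def using mpos assms by (simp add: pos_imp_zdiv_nonneg_iff)
  have "i < x*m" using assms n by simp
  hence rx: "r \<le> x - 1"
  proof -
    have "i div m * m \<le> i" using mpos by (metis minus_mod_eq_div_mult pos_mod_sign diff_ge_0_iff_ge le_diff_eq add_0_right le_add_same_cancel1 diff_le_eq)
    hence "i div m * m < x * m" using \<open>i < x*m\<close> by (simp add: mult.commute)
    hence "i div m < x" using mpos by (simp add: mult_less_cancel_right)
    thus ?thesis by (simp add: r_def)
  qed
  have s0: "0 \<le> s" "s \<le> (a+1)*(v-1)" unfolding s_def m_def using mpos m_def
    using pos_mod_bound[of m i] by (auto simp: m_def)
  have v1: "v - 1 \<ge> 1" using assms by simp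
  have p0: "p \<ge> 0" "p \<le> a+1" unfolding p_def using s0 v1
    by (auto simp: pos_imp_zdiv_nonneg_iff intro: order_trans[OF zdiv_mono1[OF s0(2)]])
  have q0: "q \<ge> 0" "q \<le> v-2" unfolding q_def using v1 pos_mod_bound[of "v-1" s] pos_mod_sign[of "v-1" s] by linarith+
  have xpos: "x > 0" using assms by simp
  have A: "a*r \<le> a*(x-1)" using rx assms by (simp add: mult_left_mono)
  have B: "x*a*q \<le> x*a*(v-2)" using q0 assms xpos by (simp add: mult_left_mono)
  have C: "(x*v-1)*p \<ge> 0" using p0 assms xpos by simp
  have D: "(x*v-1)*p \<le> (x*v-1)*(a+1)" using p0 assms xpos by (simp add: mult_left_mono)
  have E: "a*r \<ge> 0" "x*a*q \<ge> 0" using r0 q0 assms xpos by auto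
  have F: "x*a*(v-2) \<ge> 0" using assms xpos by simp
  have H: "x*a*(v-1) + x*v - 1 - (a*(x-1) + x*a*(v-2)) = x*v - 1 + a" by (simp add: algebra_simps)
  have xv: "x*v \<ge> 1" using xpos assms by (smt (verit) mult_le_cancel_left1)
  have up: "a*r - (x*v-1)*p + x*a*q < N" using A B C H xv assms unfolding N_def
    by linarith
  have H2: "2*(x*a*(v-1) + x*v - 1) - (x*v-1)*(a+1) = x*a*(v-2) + x*v + a - 1" by (simp add: algebra_simps)
  have lo: "-2*N \<le> a*r - (x*v-1)*p + x*a*q" using D E F H2 xv assms unfolding N_def
    by linarith
  have ax: "a*(x-1) \<ge> 0" using assms by simp
  have Npos: "N > 0" using H xv F ax assms unfolding N_def by linarith
  define g where "g = a*r - (x*v-1)*p + x*a*q"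
  have fl: "\<lfloor>real_of_int (f_fun a x u v i) / real_of_int (part_size a x u v - 1)\<rfloor> = g div N"
    unfolding f N g_def by (rule floor_divide_of_int_eq)
  have g1: "g \<le> N - 1" "-2*N \<le> g" using up lo g_def by auto
  have "g div N \<le> (N-1) div N" using zdiv_mono1[OF g1(1) Npos] .
  also have "(N-1) div N = 0" using Npos by (simp add: div_pos_pos_trivial)
  finally have lt1: "g div N < 1" by simp
  have "(-2*N) div N \<le> g div N" using zdiv_mono1[OF g1(2) Npos] .
  moreover have "(-2*N) div N = -2" using Npos by (metis nonzero_mult_div_cancel_right less_irrefl)
  ultimately have ge: "g div N \<ge> -2" by simp
  show ?thesis unfolding fl using lt1 ge by auto
qed

theorem proposition4p8:
  fixes a x u v :: int
  assumes "3 \<le> a" "a \<le> x" "0 \<le> u" "u \<le> a - 3"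
    and "u + 2 \<le> v" "v \<le> a - 1"
    and "real_of_int v \<le> real_of_int (a * (x - 1)) / real_of_int x"
  shows "{1..part_size a x u v - 2} = F_set a x u v 0 \<union> F_set a x u v 1 \<union> F_set a x u v 2
    \<and> (\<forall>k. k \<notin> {0, 1, 2} \<longrightarrow> F_set a x u v k = {})"
proof -
  have K: "\<And>i. i \<in> {1..part_size a x u v - 2} \<Longrightarrow>
     - \<lfloor>real_of_int (f_fun a x u v i) / real_of_int (part_size a x u v - 1)\<rfloor> \<in> {0,1,2}"
    using key[OF assms(1-6)] by auto
  show ?thesis
  proof
    show "{1..part_size a x u v - 2} = F_set a x u v 0 \<union> F_set a x u v 1 \<union> F_set a x u v 2"
    proof
      show "{1..part_size a x u v - 2} \<subseteq> F_set a x u v 0 \<union> F_set a x u v 1 \<union> F_set a x u v 2"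
      proof
        fix i assume i: "i \<in> {1..part_size a x u v - 2}"
        obtain k where kd: "k = - \<lfloor>real_of_int (f_fun a x u v i) / real_of_int (part_size a x u v - 1)\<rfloor>" by blast
        have "i \<in> F_set a x u v k" unfolding F_set_def using i kd by blast
        moreover have "k \<in> {0,1,2}" using K[OF i] kd by simp
        ultimately show "i \<in> F_set a x u v 0 \<union> F_set a x u v 1 \<union> F_set a x u v 2" by auto
      qed
      show "F_set a x u v 0 \<union> F_set a x u v 1 \<union> F_set a x u v 2 \<subseteq> {1..part_size a x u v - 2}"
        unfolding F_set_def by blast
    qed
    show "\<forall>k. k \<notin> {0, 1, 2} \<longrightarrow> F_set a x u v k = {}"
    proof (intro allI impI)
      fix k :: int assume k: "k \<notin> {0,1,2}"
      show "F_set a x u v k = {}"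
      proof (rule ccontr)
        assume "F_set a x u v k \<noteq> {}"
        then obtain i where i: "i \<in> F_set a x u v k" by blast
        hence "i \<in> {1..part_size a x u v - 2}" and e: "k = - \<lfloor>real_of_int (f_fun a x u v i) / real_of_int (part_size a x u v - 1)\<rfloor>"
          unfolding F_set_def by blast+
        from K[OF this(1)] e k show False by (simp only:) blast
      qed
    qed
  qed
qed

end
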